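(* Let $p$ be a prime, $q=p^n$, $\mathbb{Z}_q$ the valuation ring of the unramified extension of $\mathbb{Q}_p$ of degree $n$, and let $H(Z)=\sum_k h_k(x)Z^k\in\mathbb{Z}_q[x][Z]$ with $d_k:=\deg h_k$. Assume $h_0(x)\equiv 0\pmod p$ and $h_1(x)\equiv 1\pmod p$. Let $\Delta_{n,j}$ ($n\ge1$, $j\ge0$) be integers with $0\le\Delta_{n,0}\le\Delta_{n,1}\le\cdots$ for each $n$, put $\delta_j:=\Delta_{1,j}$, and assume: 1. $\Delta_{n+1,j}\ge\max\{\Delta_{n,j-l}+\delta_l : 0\le l\le j\}$ for all $n\ge1$, $j\ge0$; 2. $\delta_0\ge d_0$; 3. $\delta_j-\delta_{j-1}\ge d_1$ for all $j\ge1$; 4. $\delta_{k-1+j}\ge\Delta_{k,j}+d_k$ for all $k\ge2$, $j\ge0$. Then the unique solution $\alpha=\sum_{i\ge0}a_ix^i\in\mathbb{Z}_q\langle x\rangle$ of $H(\alpha)=0$ with $\alpha\equiv 0\pmod p$ satisfies $v_p(a_i)\ge j+2$ whenever $i\ge\delta_j+1$. Moreover, integers $\Delta_{n,j}$ satisfying these conditions always exist.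
   Context: $\mathbb{Z}_q\langle x\rangle$ is the ring of overconvergent power series $\sum_i a_ix^i\in\mathbb{Z}_q[[x]]$ with $\liminf_{i\to\infty}v_p(a_i)/i>0$; $v_p$ is the $p$-adic valuation. *)

theory Defs
  imports "HOL-Library.Extended_Real" "HOL-Library.Liminf_Limsup"
    "HOL-Computational_Algebra.Polynomial_FPS"
begin

text \<open>Abstract characterisation of \<open>Z_q\<close> (q = p^m): the ring type 'a together with
  the normalised p-adic valuation v is a complete discrete valuation ring with
  uniformiser p and residue field of cardinality p^m.  (A complete DVR of mixed
  characteristic with uniformiser p and finite residue field F_q is, up to isomorphism,
  exactly the valuation ring Z_q of the unramified extension of Q_p of degree m.)\<close>
definition is_Zq :: "nat \<Rightarrow> nat \<Rightarrow> ('a::comm_ring_1 \<Rightarrow> enat) \<Rightarrow> bool" where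
  "is_Zq p m v \<longleftrightarrow>
     m \<ge> 1 \<and>
     (\<forall>x. v x = \<infinity> \<longleftrightarrow> x = 0) \<and>
     (\<forall>x y. v (x * y) = v x + v y) \<and>
     (\<forall>x y. min (v x) (v y) \<le> v (x + y)) \<and>
     v (of_nat p) = 1 \<and>
     (\<forall>x. v x = 0 \<longleftrightarrow> x dvd 1) \<and>
     (\<forall>x. 1 \<le> v x \<longrightarrow> of_nat p dvd x) \<and>
     (\<forall>s::nat \<Rightarrow> 'a. (\<forall>k. \<exists>N. \<forall>i\<ge>N. enat k \<le> v (s i - s N)) \<longrightarrow>
         (\<exists>l. \<forall>k. \<exists>N. \<forall>i\<ge>N. enat k \<le> v (s i - l))) \<and>
     (\<exists>S. finite S \<and> card S = p ^ m \<and> (\<forall>x. \<exists>!s. s \<in> S \<and> 1 \<le> v (x - s)))"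

definition overconvergent :: "('a::comm_ring_1 \<Rightarrow> enat) \<Rightarrow> 'a fps \<Rightarrow> bool" where
  "overconvergent v f \<longleftrightarrow>
     0 < liminf (\<lambda>i. ereal_of_enat (v (fps_nth f i)) / ereal (real i))"

definition eval_H :: "'a::comm_ring_1 poly poly \<Rightarrow> 'a fps \<Rightarrow> 'a fps" where
  "eval_H H \<alpha> = (\<Sum>k\<le>degree H. fps_of_poly (coeff H k) * \<alpha> ^ k)"

definition Delta_ok :: "'a::comm_ring_1 poly poly \<Rightarrow> (nat \<Rightarrow> nat \<Rightarrow> int) \<Rightarrow> bool" where
  "Delta_ok H \<Delta> \<longleftrightarrow>
     (\<forall>n\<ge>1. 0 \<le> \<Delta> n 0 \<and> (\<forall>j. \<Delta> n j \<le> \<Delta> n (Suc j))) \<and>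
     (\<forall>n\<ge>1. \<forall>j. \<forall>l\<le>j. \<Delta> n (j - l) + \<Delta> 1 l \<le> \<Delta> (n + 1) j) \<and>
     int (degree (coeff H 0)) \<le> \<Delta> 1 0 \<and>
     (\<forall>j\<ge>1. int (degree (coeff H 1)) \<le> \<Delta> 1 j - \<Delta> 1 (j - 1)) \<and>
     (\<forall>k\<ge>2. coeff H k \<noteq> 0 \<longrightarrow>
        (\<forall>j. \<Delta> k j + int (degree (coeff H k)) \<le> \<Delta> 1 (k - 1 + j)))"

end

theory Submission
  imports Defs
begin

unbundle fps_syntax

locale vring =
  fixes v :: "'a::comm_ring_1 \<Rightarrow> enat" and p :: nat
  assumes v_inf: "\<And>x. v x = \<infinity> \<longleftrightarrow> x = 0"
  and v_mult: "\<And>x y. v (x * y) = v x + v y"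
  and v_add: "\<And>x y. min (v x) (v y) \<le> v (x + y)"
  and v_p: "v (of_nat p) = 1"
  and v_dvd: "\<And>x. 1 \<le> v x \<Longrightarrow> of_nat p dvd x"
  and v_complete: "\<And>s::nat \<Rightarrow> 'a. (\<forall>k. \<exists>N. \<forall>i\<ge>N. enat k \<le> v (s i - s N)) \<Longrightarrow>
         (\<exists>l. \<forall>k. \<exists>N. \<forall>i\<ge>N. enat k \<le> v (s i - l))"
begin

lemma v_zero[simp]: "v 0 = \<infinity>" using v_inf by simp

lemma v_one[simp]: "v 1 = 0"
proof -
  have "v (of_nat p) = v (of_nat p * 1)" by simp
  also have "\<dots> = v (of_nat p) + v 1" by (rule v_mult)
  finally have "(1::enat) = 1 + v 1" using v_p by simp
  then show ?thesis by (cases "v 1") (auto simp: one_enat_def zero_enat_def)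
qed

lemma v_neg[simp]: "v (- x) = v x"
proof -
  have "v (-1) + v (-1) = 0" using v_mult[of "-1" "-1"] by simp
  then have "v (-1) = 0" by simp
  then show ?thesis using v_mult[of "-1" x] by simp
qed

lemma v_commute: "v (y - x) = v (x - y)" by (metis minus_diff_eq v_neg)

lemma v_diff: "min (v x) (v y) \<le> v (x - y)"
  using v_add[of x "-y"] by simp

lemma v_add_ge: "N \<le> v x \<Longrightarrow> N \<le> v y \<Longrightarrow> N \<le> v (x + y)"
  using v_add[of x y] by (meson min.boundedI order_trans)

lemma v_diff_ge: "N \<le> v x \<Longrightarrow> N \<le> v y \<Longrightarrow> N \<le> v (x - y)"
  using v_diff[of x y] by (meson min.boundedI order_trans)

lemma v_sum_ge: "(\<And>i. i \<in> A \<Longrightarrow> N \<le> v (f i)) \<Longrightarrow> N \<le> v (sum f A)"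
proof (induction A rule: infinite_finite_induct)
  case (insert x F) then show ?case by (simp add: v_add_ge)
qed simp_all

lemma v_mult_ge: "a \<le> v x \<Longrightarrow> b \<le> v y \<Longrightarrow> a + b \<le> v (x * y)"
  by (simp add: v_mult add_mono)

lemma v_dvd_ge: "of_nat p dvd x \<Longrightarrow> 1 \<le> v x"
  by (auto simp: v_mult v_p)

lemma v_all: "(\<And>N. enat N \<le> v x) \<Longrightarrow> x = 0"
  by (metis enat_ord_simps(2) not_infinity_eq v_inf lessI leD)

definition vge :: "nat \<Rightarrow> 'a fps \<Rightarrow> bool" where
  "vge N f \<longleftrightarrow> (\<forall>i. enat N \<le> v (f $ i))"

lemma vge_0[simp]: "vge 0 f" by (simp add: vge_def zero_enat_def[symmetric])
lemma vge_zero[simp]: "vge N 0" by (simp add: vge_def)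
lemma vge_add: "vge N f \<Longrightarrow> vge N g \<Longrightarrow> vge N (f + g)"
  by (simp add: vge_def v_add_ge)
lemma vge_diff: "vge N f \<Longrightarrow> vge N g \<Longrightarrow> vge N (f - g)"
  by (simp add: vge_def v_diff_ge)
lemma vge_neg[simp]: "vge N (- f) = vge N f"
  by (simp add: vge_def)
lemma vge_mono: "vge N f \<Longrightarrow> M \<le> N \<Longrightarrow> vge M f"
  by (meson enat_ord_simps(1) order_trans vge_def)
lemma vge_sum: "(\<And>i. i \<in> A \<Longrightarrow> vge N (f i)) \<Longrightarrow> vge N (sum f A)"
  by (simp add: vge_def fps_sum_nth v_sum_ge)
lemma vge_mult: "vge a f \<Longrightarrow> vge b g \<Longrightarrow> vge (a + b) (f * g)"
  unfolding vge_def fps_mult_nth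
  by (auto intro!: v_sum_ge simp flip: plus_enat_simps(1) intro: v_mult_ge)
lemma vge_power: "vge a f \<Longrightarrow> vge (a * k) (f ^ k)"
proof (induction k)
  case 0 then show ?case by simp
next
  case (Suc k) then show ?case using vge_mult[of a f "a*k" "f^k"] by (simp add: add.commute)
qed
lemma vge_all: "(\<And>N. vge N f) \<Longrightarrow> f = 0"
  by (rule fps_ext) (auto simp: vge_def intro: v_all)
lemma vge_poly_dvd: assumes "\<And>i. of_nat p dvd coeff c i" shows "vge 1 (fps_of_poly c)"
proof -
  have "1 \<le> v (coeff c i)" for i using assms v_dvd_ge by blast
  then show ?thesis unfolding vge_def by (metis fps_of_poly_nth one_enat_def)
qed
lemma vge1_dvd: "vge 1 f \<Longrightarrow> of_nat p dvd f $ i"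
  unfolding vge_def using v_dvd by (metis one_enat_def)


lemma vge_pow1: "vge 1 f \<Longrightarrow> vge k (f ^ k)"
  using vge_power[of 1 f k] by simp

definition T :: "'a poly poly \<Rightarrow> 'a fps \<Rightarrow> 'a fps" where
  "T H b = - (fps_of_poly (coeff H 0) + (fps_of_poly (coeff H 1) - 1) * b
      + (\<Sum>k\<in>{2..Suc (degree H)}. fps_of_poly (coeff H k) * b ^ k))"

lemma eval_T: "eval_H H b = b - T H b"
proof -
  let ?f = "\<lambda>k. fps_of_poly (coeff H k) * b ^ k"
  have "eval_H H b = (\<Sum>k\<le>Suc (degree H). ?f k)"
    by (simp add: eval_H_def coeff_eq_0)
  also have "{..Suc (degree H)} = {0,1} \<union> {2..Suc (degree H)}" by auto
  also have "sum ?f \<dots> = sum ?f {0,1} + sum ?f {2..Suc (degree H)}"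
    by (rule sum.union_disjoint) auto
  finally show ?thesis by (simp add: T_def algebra_simps)
qed

lemma T_contract:
  assumes h1: "vge 1 (fps_of_poly (coeff H 1) - 1)"
    and b: "vge 1 b" and c: "vge 1 c" and M: "vge M (b - c)"
  shows "vge (Suc M) (T H b - T H c)"
proof -
  have eq: "T H b - T H c = - ((fps_of_poly (coeff H 1) - 1) * (b - c)
      + (\<Sum>k\<in>{2..Suc (degree H)}. fps_of_poly (coeff H k) * (b ^ k - c ^ k)))"
  proof -
    have g: "\<And>h0 g X Y. -(h0 + g*b + X) - (-(h0 + g*c + Y)) = -(g*(b-c) + (X - Y))"
      by (simp add: algebra_simps)
    have "(\<Sum>k\<in>{2..Suc (degree H)}. fps_of_poly (coeff H k) * b ^ k) - (\<Sum>k\<in>{2..Suc (degree H)}. fps_of_poly (coeff H k) * c ^ k)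
       = (\<Sum>k\<in>{2..Suc (degree H)}. fps_of_poly (coeff H k) * (b ^ k - c ^ k))"
      by (simp add: sum_subtractf right_diff_distrib)
    then show ?thesis unfolding T_def g by simp
  qed
  have t1: "vge (Suc M) ((fps_of_poly (coeff H 1) - 1) * (b - c))"
    using vge_mult[OF h1 M] by simp
  have t2: "vge (Suc M) (fps_of_poly (coeff H k) * (b ^ k - c ^ k))" if k: "k \<in> {2..Suc (degree H)}" for k
  proof -
    have S: "vge 1 (\<Sum>i<k. c ^ (k - Suc i) * b ^ i)"
    proof (rule vge_sum)
      fix i assume "i \<in> {..<k}"
      have X: "vge ((k - Suc i) + i) (c ^ (k - Suc i) * b ^ i)"
        by (intro vge_mult vge_pow1 b c)
      show "vge 1 (c ^ (k - Suc i) * b ^ i)" by (rule vge_mono[OF X]) (use k \<open>i \<in> {..<k}\<close> in auto)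
    qed
    have "vge (0 + (M + 1)) (fps_of_poly (coeff H k) * ((b - c) * (\<Sum>i<k. c ^ (k - Suc i) * b ^ i)))"
      by (intro vge_mult M S vge_0)
    then show ?thesis by (simp add: power_diff_sumr2)
  qed
  show ?thesis unfolding eq vge_neg using t1 t2 by (intro vge_add vge_sum) auto
qed

lemma T_vge1:
  assumes h0: "vge 1 (fps_of_poly (coeff H 0))" and h1: "vge 1 (fps_of_poly (coeff H 1) - 1)"
    and b: "vge 1 b"
  shows "vge 1 (T H b)"
proof -
  have "vge (1+1) ((fps_of_poly (coeff H 1) - 1) * b)" by (rule vge_mult[OF h1 b])
  then have 1: "vge 1 ((fps_of_poly (coeff H 1) - 1) * b)" by (rule vge_mono) simp
  have 2: "vge 1 (fps_of_poly (coeff H k) * b ^ k)" if "k \<in> {2..Suc (degree H)}" for k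
  proof -
    have "vge (0 + k) (fps_of_poly (coeff H k) * b ^ k)" by (intro vge_mult vge_pow1 b vge_0)
    then show ?thesis by (rule vge_mono) (use that in auto)
  qed
  show ?thesis unfolding T_def vge_neg using h0 1 2 by (intro vge_add vge_sum) auto
qed

lemma T_unique:
  assumes h1: "vge 1 (fps_of_poly (coeff H 1) - 1)"
    and b: "vge 1 b" and c: "vge 1 c" and "T H b = b" "T H c = c"
  shows "b = c"
proof -
  have "vge M (b - c)" for M
  proof (induction M)
    case (Suc M) then show ?case using T_contract[OF h1 b c Suc] assms(4,5) by simp
  qed simp
  then show ?thesis using vge_all[of "b - c"] by simp
qed

lemma T_exists:
  assumes h0: "vge 1 (fps_of_poly (coeff H 0))" and h1: "vge 1 (fps_of_poly (coeff H 1) - 1)"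
  shows "\<exists>a. vge 1 a \<and> T H a = a"
proof -
  define s where "s N = (T H ^^ N) 0" for N
  have sS: "s (Suc N) = T H (s N)" for N by (simp add: s_def)
  have s1: "vge 1 (s N)" for N
  proof (induction N)
    case 0 show ?case by (simp add: s_def)
  next
    case (Suc N) then show ?case unfolding sS by (rule T_vge1[OF h0 h1])
  qed
  have step: "vge N (s (Suc N) - s N)" for N
  proof (induction N)
    case (Suc N)
    have "vge (Suc N) (T H (s (Suc N)) - T H (s N))" by (rule T_contract[OF h1 s1 s1 Suc.IH])
    then show ?case by (simp only: sS)
  qed simp
  have cau: "vge N (s (N + d) - s N)" for N d
  proof (induction d)
    case (Suc d)
    have "vge N (s (Suc (N + d)) - s (N + d))" using step[of "N+d"] by (rule vge_mono) simp
    from vge_add[OF this Suc] show ?case by simp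
  qed simp
  have cau': "vge N (s i - s N)" if "i \<ge> N" for N i
    using cau[of N "i - N"] that by simp
  have "\<exists>l. \<forall>k. \<exists>N. \<forall>i\<ge>N. enat k \<le> v (s i $ c - l)" for c
  proof (rule v_complete)
    show "\<forall>k. \<exists>N. \<forall>i\<ge>N. enat k \<le> v (s i $ c - s N $ c)"
    proof (intro allI)
      fix k :: nat
      show "\<exists>N. \<forall>i\<ge>N. enat k \<le> v (s i $ c - s N $ c)"
      proof (intro exI[of _ k] allI impI)
        fix i assume "i \<ge> k"
        then show "enat k \<le> v (s i $ c - s k $ c)" using cau'[of k i] by (simp add: vge_def)
      qed
    qed
  qed
  then obtain l where l: "\<And>c k. \<exists>N. \<forall>i\<ge>N. enat k \<le> v (s i $ c - l c)" by metis
  define a where "a = Abs_fps l"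
  have aN: "vge N (a - s N)" for N
    unfolding vge_def
  proof
    fix c
    obtain N' where N': "\<And>i. i \<ge> N' \<Longrightarrow> enat N \<le> v (s i $ c - l c)" using l by metis
    define i where "i = max N N'"
    have e: "(a - s N) $ c = (l c - s i $ c) + (s i $ c - s N $ c)" by (simp add: a_def)
    have "enat N \<le> v (s i $ c - s N $ c)" using cau'[of N i] by (simp add: vge_def i_def)
    moreover have "enat N \<le> v (l c - s i $ c)" using N'[of i] v_commute[of "l c"] by (simp add: i_def)
    ultimately show "enat N \<le> v ((a - s N) $ c)" unfolding e by (metis v_add_ge)
  qed
  have a1: "vge 1 a" using vge_add[OF aN[of 1] s1[of 1]] by simp
  have "vge N (T H a - a)" for N
  proof -
    have "vge (Suc N) (T H a - T H (s N))" by (rule T_contract[OF h1 a1 s1 aN])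
    moreover have "vge (Suc N) (s (Suc N) - a)" using aN[of "Suc N"] vge_neg[of _ "a - s (Suc N)"] by simp
    ultimately have "vge (Suc N) (T H a - a)" using vge_add by (fastforce simp: sS)
    then show ?thesis by (rule vge_mono) simp
  qed
  then have "T H a = a" using vge_all[of "T H a - a"] by simp
  with a1 show ?thesis by blast
qed


end

lemma Delta_mono: "Delta_ok H \<Delta> \<Longrightarrow> n \<ge> 1 \<Longrightarrow> j1 \<le> j2 \<Longrightarrow> \<Delta> n j1 \<le> \<Delta> n j2"
  unfolding Delta_ok_def by (metis lift_Suc_mono_le)
lemma Delta_c1: "Delta_ok H \<Delta> \<Longrightarrow> n \<ge> 1 \<Longrightarrow> l \<le> j \<Longrightarrow> \<Delta> n (j - l) + \<Delta> 1 l \<le> \<Delta> (n + 1) j"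
  unfolding Delta_ok_def by blast
lemma Delta_c2: "Delta_ok H \<Delta> \<Longrightarrow> int (degree (coeff H 0)) \<le> \<Delta> 1 0"
  unfolding Delta_ok_def by blast
lemma Delta_c3: "Delta_ok H \<Delta> \<Longrightarrow> j \<ge> 1 \<Longrightarrow> int (degree (coeff H 1)) \<le> \<Delta> 1 j - \<Delta> 1 (j - 1)"
  unfolding Delta_ok_def by blast
lemma Delta_c4: "Delta_ok H \<Delta> \<Longrightarrow> k \<ge> 2 \<Longrightarrow> coeff H k \<noteq> 0 \<Longrightarrow> \<Delta> k j + int (degree (coeff H k)) \<le> \<Delta> 1 (k - 1 + j)"
  unfolding Delta_ok_def by blast
lemma split_lemma:
  fixes f :: "nat \<Rightarrow> int"
  shows "x \<le> f 0 \<or> f j < x \<or> (\<exists>l. 1 \<le> l \<and> l \<le> j \<and> f (l - 1) < x \<and> x \<le> f l)"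
proof (induction j)
  case (Suc j)
  then show ?case
  proof (elim disjE)
    assume "f j < x"
    then show ?thesis by (cases "f (Suc j) < x") (auto intro!: exI[of _ "Suc j"])
  qed (blast, use le_SucI in blast)
qed auto

context vring begin
lemma poly_mult_bound:
  assumes e: "\<And>m. e \<le> v (coeff c m)" and E: "\<And>i'. B < int i' \<Longrightarrow> E \<le> v (f $ i')"
    and i: "B + int (degree c) < int i"
  shows "e + E \<le> v ((fps_of_poly c * f) $ i)"
  unfolding fps_mult_nth fps_of_poly_nth
proof (rule v_sum_ge)
  fix m assume m: "m \<in> {0..i}"
  show "e + E \<le> v (coeff c m * f $ (i - m))"
  proof (cases "m \<le> degree c")
    case True
    then have "B < int (i - m)" using i m by auto
    then show ?thesis by (intro v_mult_ge e E)
  next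
    case False then show ?thesis by (simp add: coeff_eq_0)
  qed
qed

lemma bound_main:
  assumes D: "Delta_ok H \<Delta>" and h1: "vge 1 (fps_of_poly (coeff H 1) - 1)"
    and a1: "vge 1 \<alpha>" and fx: "T H \<alpha> = \<alpha>"
  shows "\<forall>n\<ge>1. \<forall>i. \<Delta> n j < int i \<longrightarrow> enat (n + j + 1) \<le> v ((\<alpha> ^ n) $ i)"
proof (induction j rule: less_induct)
  case (less j)
  note mono = Delta_mono[OF D] and c1 = Delta_c1[OF D] and c2 = Delta_c2[OF D]
    and c3 = Delta_c3[OF D] and c4 = Delta_c4[OF D]
  have vpow: "enat n \<le> v ((\<alpha> ^ n) $ i)" for n i
    using vge_pow1[OF a1, of n] by (simp add: vge_def)
  have Q1: "enat (j + 2) \<le> v (\<alpha> $ i)" if i: "\<Delta> 1 j < int i" for i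
  proof -
    let ?K = "{2..Suc (degree H)}"
    have eq: "\<alpha> $ i = - (coeff (coeff H 0) i + (fps_of_poly (coeff H 1 - 1) * \<alpha>) $ i
       + (\<Sum>k\<in>?K. (fps_of_poly (coeff H k) * \<alpha> ^ k) $ i))"
      by (subst fx[symmetric]) (simp add: T_def fps_sum_nth fps_of_poly_diff)
    have "coeff (coeff H 0) i = 0"
      using c2 mono[of 1 0 j] i by (intro coeff_eq_0) simp
    then have t0: "enat (j + 2) \<le> v (coeff (coeff H 0) i)" by simp
    have t1: "enat (j + 2) \<le> v ((fps_of_poly (coeff H 1 - 1) * \<alpha>) $ i)"
    proof (cases "j = 0")
      case True
      have "vge (1 + 1) (fps_of_poly (coeff H 1 - 1) * \<alpha>)"
        using vge_mult[OF h1 a1] by (simp add: fps_of_poly_diff)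
      then show ?thesis using True by (simp add: vge_def)
    next
      case False
      have "enat 1 + enat (1 + (j - 1) + 1) \<le> v ((fps_of_poly (coeff H 1 - 1) * \<alpha>) $ i)"
      proof (rule poly_mult_bound)
        show "enat 1 \<le> v (coeff (coeff H 1 - 1) m)" for m
          using h1 by (simp add: vge_def fps_of_poly_diff flip: fps_of_poly_nth)
        show "enat (1 + (j - 1) + 1) \<le> v (\<alpha> $ i')" if "\<Delta> 1 (j - 1) < int i'" for i'
        proof -
          have "j - 1 < j" using False by simp
          from less.IH[OF this] have "enat (1 + (j-1) + 1) \<le> v ((\<alpha>^1)$i')" using that by blast
          then show ?thesis by simp
        qed
        have "degree (coeff H 1 - 1) \<le> degree (coeff H 1)"
          using degree_diff_le_max[of "coeff H 1" 1] by simp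
        then show "\<Delta> 1 (j - 1) + int (degree (coeff H 1 - 1)) < int i"
          using c3[of j] False i by linarith
      qed
      then show ?thesis using False by simp
    qed
    have tk: "enat (j + 2) \<le> v ((fps_of_poly (coeff H k) * \<alpha> ^ k) $ i)" if k: "k \<in> ?K" for k
    proof (cases "coeff H k = 0")
      case True then show ?thesis by simp
    next
      case nz: False
      show ?thesis
      proof (cases "j + 2 \<le> k")
        case True
        have "vge (0 + k) (fps_of_poly (coeff H k) * \<alpha> ^ k)" by (intro vge_mult vge_pow1 a1 vge_0)
        then have "enat k \<le> v ((fps_of_poly (coeff H k) * \<alpha> ^ k) $ i)" by (simp add: vge_def)
        then show ?thesis using True by (meson enat_ord_simps(1) order_trans)
      next
        case False
        define j' where "j' = j + 1 - k"
        have j': "j' < j" "k + j' + 1 = j + 2" "k - 1 + j' = j" using False k by (auto simp: j'_def)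
        have "0 + enat (k + j' + 1) \<le> v ((fps_of_poly (coeff H k) * \<alpha> ^ k) $ i)"
        proof (rule poly_mult_bound)
          show "0 \<le> v (coeff (coeff H k) m)" for m by simp
          show "enat (k + j' + 1) \<le> v ((\<alpha> ^ k) $ i')" if "\<Delta> k j' < int i'" for i'
            using less.IH[OF j'(1)] k that by auto
          show "\<Delta> k j' + int (degree (coeff H k)) < int i"
            using c4[of k j'] k nz j'(3) i by auto
        qed
        then show ?thesis using j'(2) by simp
      qed
    qed
    show ?thesis unfolding eq v_neg
      by (intro v_add_ge v_sum_ge t0 t1 tk)
  qed
  show ?case
  proof (intro allI impI)
    fix n i assume "1 \<le> n" "\<Delta> n j < int i"
    then show "enat (n + j + 1) \<le> v ((\<alpha> ^ n) $ i)"
    proof (induction n arbitrary: i rule: nat_induct_at_least)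
      case base then show ?case using Q1 by (simp add: add.commute)
    next
      case (Suc n)
      have IHn: "enat (n + j + 1) \<le> v ((\<alpha> ^ n) $ a)" if "\<Delta> n j < int a" for a
        using Suc.IH that by blast
      have IHt: "enat (n + t + 1) \<le> v ((\<alpha> ^ n) $ a)" if "t < j" "\<Delta> n t < int a" for a t
        using less.IH[OF that(1)] Suc.hyps that(2) by blast
      have Qs: "enat (s + 2) \<le> v (\<alpha> $ b)" if "s < j" "\<Delta> 1 s < int b" for s b
        using less.IH[OF that(1)] that(2) by (auto simp: add.commute)
      have "(\<alpha> ^ Suc n) $ i = (\<Sum>a=0..i. (\<alpha> ^ n) $ a * \<alpha> $ (i - a))"
        by (simp add: fps_mult_nth mult.commute[of \<alpha>])
      also have "enat (Suc n + j + 1) \<le> v \<dots>"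
      proof (rule v_sum_ge)
        fix a assume a: "a \<in> {0..i}"
        define b where "b = i - a"
        have ab: "int a = int i - int b" using a by (auto simp: b_def)
        consider "int b \<le> \<Delta> 1 0" | "\<Delta> 1 j < int b"
          | l where "1 \<le> l" "l \<le> j" "\<Delta> 1 (l - 1) < int b" "int b \<le> \<Delta> 1 l"
          using split_lemma[of "int b" "\<Delta> 1" j] by blast
        then show "enat (Suc n + j + 1) \<le> v ((\<alpha> ^ n) $ a * \<alpha> $ (i - a))"
        proof cases
          case 1
          have "\<Delta> n j < int a" using c1[of n 0 j] Suc.hyps Suc.prems 1 ab by simp
          then have "enat (n + j + 1) + enat 1 \<le> v ((\<alpha> ^ n) $ a * \<alpha> $ (i - a))"
            using vpow[of 1 "i - a"] by (intro v_mult_ge IHn) simp_all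
          then show ?thesis by simp
        next
          case 2
          then have "enat n + enat (j + 2) \<le> v ((\<alpha> ^ n) $ a * \<alpha> $ (i - a))"
            by (intro v_mult_ge vpow Q1) (simp add: b_def)
          then show ?thesis by simp
        next
          case 3
          have "\<Delta> n (j - l) < int a" using c1[of n l j] Suc.hyps Suc.prems 3 ab by simp
          then have "enat (n + (j - l) + 1) + enat ((l - 1) + 2) \<le> v ((\<alpha> ^ n) $ a * \<alpha> $ (i - a))"
            using 3 by (intro v_mult_ge IHt Qs) (simp_all add: b_def)
          moreover have "n + (j - l) + 1 + ((l - 1) + 2) = Suc n + j + 1" using 3 by simp
          ultimately show ?thesis by simp
        qed
      qed
      finally show ?case .
    qed
  qed
qed

end

lemma ereal_bound:
  fixes x :: enat and i k :: nat and c :: real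
  assumes "enat k \<le> x" "i > 0" "c * real i \<le> real k"
  shows "ereal c \<le> ereal_of_enat x / ereal (real i)"
proof (cases x)
  case (enat n)
  have "c * real i \<le> real n" using assms enat by (meson enat_ord_simps(1) of_nat_le_iff order_trans)
  then have "c \<le> real n / real i" using assms by (simp add: field_simps)
  then show ?thesis using enat assms by (simp add: ereal_of_enat_def)
next
  case infinity then show ?thesis using assms by simp
qed

lemma Delta_exists:
  fixes H :: "'a::comm_ring_1 poly poly"
  defines "B \<equiv> degree (coeff H 0)"
  defines "A \<equiv> B + (\<Sum>k\<le>degree H. degree (coeff H k)) + degree (coeff H 1) + 1"
  shows "Delta_ok H (\<lambda>n j. int (A * j + n * B))"
  unfolding Delta_ok_def
proof (intro conjI allI impI)
  fix n j l :: nat assume "l \<le> j"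
  then obtain d where "j = l + d" using le_Suc_ex by blast
  then have "A * (j - l) + n * B + (A * l + 1 * B) = A * j + (n + 1) * B"
    by (simp add: algebra_simps)
  then show "int (A * (j - l) + n * B) + int (A * l + 1 * B) \<le> int (A * j + (n + 1) * B)"
    by linarith
next
  fix j :: nat assume "1 \<le> j"
  then have "A * j + 1 * B = A + (A * (j - 1) + 1 * B)"
    by (cases j) (simp_all add: algebra_simps)
  moreover have "degree (coeff H 1) \<le> A" by (simp add: A_def)
  ultimately show "int (degree (coeff H 1)) \<le> int (A * j + 1 * B) - int (A * (j - 1) + 1 * B)"
    by linarith
next
  fix k j :: nat assume k: "2 \<le> k" and nz: "coeff H k \<noteq> 0"
  then have "k \<le> degree H" using le_degree by blast
  then have dk: "degree (coeff H k) \<le> (\<Sum>k\<le>degree H. degree (coeff H k))"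
    by (intro member_le_sum) auto
  have "A * (k - 1) \<ge> (B + degree (coeff H k)) * (k - 1)"
    using dk by (intro mult_right_mono) (auto simp: A_def)
  moreover have "(B + degree (coeff H k)) * (k - 1) \<ge> B * (k - 1) + degree (coeff H k)"
  proof -
    obtain m where "k = m + 2" using k le_Suc_ex by (metis add.commute)
    then show ?thesis by (simp add: algebra_simps)
  qed
  moreover have "A * (k - 1 + j) + 1 * B = A * j + A * (k - 1) + B" by (simp add: algebra_simps)
  moreover have "k * B = B * (k - 1) + B" using k by (cases k) (simp_all add: algebra_simps)
  ultimately show "int (A * j + k * B) + int (degree (coeff H k)) \<le> int (A * (k - 1 + j) + 1 * B)"
    by linarith
qed (simp_all add: B_def)


lemma Zq_vring:
  assumes "is_Zq p m (v::'a::comm_ring_1 \<Rightarrow> enat)"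
  shows "vring v p"
proof -
  note Z = assms[unfolded is_Zq_def]
  note Z1 = Z[THEN conjunct2, THEN conjunct1]
  note Z2 = Z[THEN conjunct2, THEN conjunct2, THEN conjunct1]
  note Z3 = Z[THEN conjunct2, THEN conjunct2, THEN conjunct2, THEN conjunct1]
  note Z4 = Z[THEN conjunct2, THEN conjunct2, THEN conjunct2, THEN conjunct2, THEN conjunct1]
  note Z6 = Z[THEN conjunct2, THEN conjunct2, THEN conjunct2, THEN conjunct2, THEN conjunct2, THEN conjunct2, THEN conjunct1]
  note Z7 = Z[THEN conjunct2, THEN conjunct2, THEN conjunct2, THEN conjunct2, THEN conjunct2, THEN conjunct2, THEN conjunct2, THEN conjunct1]
  show ?thesis
  proof (unfold_locales)
    show "v x = \<infinity> \<longleftrightarrow> x = 0" for x by (rule spec[OF Z1])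
    show "v (x * y) = v x + v y" for x y by (rule spec[OF spec[OF Z2]])
    show "min (v x) (v y) \<le> v (x + y)" for x y by (rule spec[OF spec[OF Z3]])
    show "v (of_nat p) = 1" by (rule Z4)
    show "of_nat p dvd x" if "1 \<le> v x" for x by (rule mp[OF spec[OF Z6] that])
    show "\<exists>l. \<forall>k. \<exists>N. \<forall>i\<ge>N. enat k \<le> v (s i - l)"
      if "\<forall>k. \<exists>N. \<forall>i\<ge>N. enat k \<le> v (s i - s N)" for s :: "nat \<Rightarrow> 'a"
      by (rule mp[OF spec[OF Z7] that])
  qed
qed

lemma vge1_iff:
  assumes "vring v p"
  shows "(\<forall>i. of_nat p dvd fps_nth b i) \<longleftrightarrow> vring.vge v 1 b"
proof -
  interpret vring v p by (rule assms)
  show ?thesis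
  proof
    assume "\<forall>i. of_nat p dvd b $ i"
    then show "vge 1 b" unfolding vge_def using v_dvd_ge by (metis one_enat_def)
  qed (use vge1_dvd in blast)
qed

theorem lemma1:
  fixes p m :: nat and v :: "'a::comm_ring_1 \<Rightarrow> enat" and H :: "'a poly poly"
  assumes "prime p"
    and "is_Zq p m v"
    and h0: "\<forall>i. of_nat p dvd coeff (coeff H 0) i"
    and h1: "\<forall>i. of_nat p dvd coeff (coeff H 1 - 1) i"
  shows "(\<exists>!\<alpha>. overconvergent v \<alpha> \<and> eval_H H \<alpha> = 0 \<and> (\<forall>i. of_nat p dvd fps_nth \<alpha> i))
       \<and> (\<forall>\<Delta> \<alpha>. Delta_ok H \<Delta> \<and> overconvergent v \<alpha> \<and> eval_H H \<alpha> = 0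
              \<and> (\<forall>i. of_nat p dvd fps_nth \<alpha> i)
            \<longrightarrow> (\<forall>i j. \<Delta> 1 j + 1 \<le> int i \<longrightarrow> enat (j + 2) \<le> v (fps_nth \<alpha> i)))
       \<and> (\<exists>\<Delta>. Delta_ok H \<Delta>)"
proof -
  have VR: "vring v p"
    by (rule Zq_vring[OF assms(2)])
  interpret vring v p by (rule VR)
  have h0': "vge 1 (fps_of_poly (coeff H 0))" by (rule vge_poly_dvd) (use h0 in blast)
  have h1': "vge 1 (fps_of_poly (coeff H 1) - 1)"
    using vge_poly_dvd[of "coeff H 1 - 1"] h1 by (simp add: fps_of_poly_diff)
  have dvd_iff: "(\<forall>i. of_nat p dvd b $ i) \<longleftrightarrow> vge 1 b" for b by (rule vge1_iff[OF VR])
  have eval_iff: "eval_H H b = 0 \<longleftrightarrow> T H b = b" for b by (auto simp: eval_T)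
  have P2: "\<forall>i j. \<Delta> 1 j + 1 \<le> int i \<longrightarrow> enat (j + 2) \<le> v (a $ i)"
    if D: "Delta_ok H \<Delta>" and a1: "vge 1 a" and fx: "T H a = a" for \<Delta> a
  proof (intro allI impI)
    fix i j assume "\<Delta> 1 j + 1 \<le> int i"
    moreover from bound_main[OF D h1' a1 fx, of j]
    have "\<forall>i. \<Delta> 1 j < int i \<longrightarrow> enat (1 + j + 1) \<le> v ((a ^ 1) $ i)" by blast
    ultimately show "enat (j + 2) \<le> v (a $ i)" by simp
  qed
  define B where "B = degree (coeff H 0)"
  define A where "A = B + (\<Sum>k\<le>degree H. degree (coeff H k)) + degree (coeff H 1) + 1"
  have DE: "Delta_ok H (\<lambda>n j. int (A * j + n * B))"
    unfolding A_def B_def by (rule Delta_exists)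
  obtain a where a1: "vge 1 a" and fx: "T H a = a" using T_exists[OF h0' h1'] by blast
  have Apos: "A > 0" by (simp add: A_def)
  have ab: "enat (j + 2) \<le> v (a $ i)" if "A * j + B + 1 \<le> i" for i j
  proof (rule P2[OF DE a1 fx, rule_format])
    have "int (A * j + B + 1) \<le> int i" using that by (simp only: of_nat_le_iff)
    then show "int (A * j + 1 * B) + 1 \<le> int i" by simp
  qed
  have oc: "overconvergent v a"
    unfolding overconvergent_def
  proof -
    define c where "c = 1 / (2 * real A)"
    have c0: "c > 0" using Apos by (simp add: c_def)
    have "\<forall>\<^sub>F i in sequentially. ereal c \<le> ereal_of_enat (v (a $ i)) / ereal (real i)"
      unfolding eventually_sequentially
    proof (intro exI[of _ "2 * (B + 1)"] allI impI)
      fix i assume i: "2 * (B + 1) \<le> i"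
      define j where "j = (i - B - 1) div A"
      have dm: "A * j + (i - B - 1) mod A = i - B - 1" unfolding j_def by (metis div_mult_mod_eq mult.commute)
      have iB: "i = (i - B - 1) + B + 1" using i by simp
      have "(i - B - 1) mod A < A" using Apos by simp
      then have lt: "i < A * j + A + B + 1" using dm iB by linarith
      have "A * j \<le> i - B - 1" using dm by (metis le_add1)
      then have v1: "enat (j + 2) \<le> v (a $ i)" using iB by (intro ab) linarith
      have "i \<le> 2 * (A * j + 2 * A)" using lt i by presburger
      then have "real i \<le> real (2 * (A * j + 2 * A))" by (simp only: of_nat_le_iff)
      also have "\<dots> = 2 * real A * real (j + 2)" by (simp add: algebra_simps)
      finally have "real i \<le> 2 * real A * real (j + 2)" .
      then have "c * real i \<le> real (j + 2)" using Apos by (simp add: c_def field_simps)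
      then show "ereal c \<le> ereal_of_enat (v (a $ i)) / ereal (real i)"
        using ereal_bound[OF v1 _ ] i by simp
    qed
    then have "ereal c \<le> liminf (\<lambda>i. ereal_of_enat (v (a $ i)) / ereal (real i))"
      by (rule Liminf_bounded)
    then show "0 < liminf (\<lambda>i. ereal_of_enat (v (a $ i)) / ereal (real i))"
      using c0 by (meson ereal_less(2) order_less_le_trans)
  qed
  have part1: "\<exists>!\<alpha>. overconvergent v \<alpha> \<and> eval_H H \<alpha> = 0 \<and> (\<forall>i. of_nat p dvd fps_nth \<alpha> i)"
  proof (rule ex1I[of _ a])
    show "overconvergent v a \<and> eval_H H a = 0 \<and> (\<forall>i. of_nat p dvd a $ i)"
      using oc fx a1 dvd_iff eval_iff by blast
  next
    fix b assume "overconvergent v b \<and> eval_H H b = 0 \<and> (\<forall>i. of_nat p dvd b $ i)"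
    then have "vge 1 b" "T H b = b" using dvd_iff eval_iff by blast+
    then show "b = a" using T_unique[OF h1' _ a1 _ fx] by blast
  qed
  show ?thesis
  proof (intro conjI)
    show "\<forall>\<Delta> \<alpha>. Delta_ok H \<Delta> \<and> overconvergent v \<alpha> \<and> eval_H H \<alpha> = 0
              \<and> (\<forall>i. of_nat p dvd fps_nth \<alpha> i)
            \<longrightarrow> (\<forall>i j. \<Delta> 1 j + 1 \<le> int i \<longrightarrow> enat (j + 2) \<le> v (fps_nth \<alpha> i))"
    proof (rule allI, rule allI, rule impI)
      fix \<Delta> b assume "Delta_ok H \<Delta> \<and> overconvergent v b \<and> eval_H H b = 0 \<and> (\<forall>i. of_nat p dvd b $ i)"
      then have "Delta_ok H \<Delta>" "vge 1 b" "T H b = b" using dvd_iff eval_iff by blast+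
      then show "\<forall>i j. \<Delta> 1 j + 1 \<le> int i \<longrightarrow> enat (j + 2) \<le> v (b $ i)" by (rule P2)
    qed
  qed (use part1 DE in blast)+
qed

end
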